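(* Assume the Green's functions $G_D[2T]$, $G_D[T]$, $G_{M_2}[T]$ exist. Let $\sigma_1,\sigma_2\in L^1(I)$, let $u_{M_2}$ be the unique solution of $Lu=\sigma_1$ a.e. on $I$, $u\in X_{M_2,T}$, and $u_D$ the unique solution of $Lu=\sigma_2$ a.e. on $I$, $u\in X_{D,T}$. Then: 1. If $G_D[2T]\ge0$ on $J\times J$ and $|\sigma_2(t)|\le\sigma_1(t)$ for a.e. $t\in I$, then $|u_D(t)|\le u_{M_2}(t)$ for all $t\in I$. 2. If $G_D[2T]\le0$ on $J\times J$ and $0\le\sigma_2(t)\le\sigma_1(t)$ for a.e. $t\in I$, then $u_{M_2}(t)\le0$ and $u_{M_2}(t)\le u_D(t)$ for all $t\in I$. 3. If $G_D[2T]\le0$ on $J\times J$ and $\sigma_1(t)\le\sigma_2(t)\le0$ for a.e. $t\in I$, then $u_{M_2}(t)\ge0$ and $u_D(t)\le u_{M_2}(t)$ for all $t\in I$.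
   Context: Fix $n\ge 1$, $T>0$, $I=[0,T]$, $J=[0,2T]$. $W^{2n,1}(K)$: $u\in C^{2n-1}(K)$ with $u^{(2n-1)}$ absolutely continuous. Let $a_0,\dots,a_{2n-1}\in L^\alpha(I)$, $\alpha\ge1$, $Lu=u^{(2n)}+\sum_{k=0}^{2n-1}a_ku^{(k)}$ on $I$. $\widetilde L u=u^{(2n)}+\sum_{k=0}^{n-1}(\hat a_{2k+1}u^{(2k+1)}+\tilde a_{2k}u^{(2k)})$ on $J$, where $\tilde a_{2k}=a_{2k}$, $\hat a_{2k+1}=a_{2k+1}$ on $I$, and $\tilde a_{2k}(t)=a_{2k}(2T-t)$, $\hat a_{2k+1}(t)=-a_{2k+1}(2T-t)$ for $t\in(T,2T]$. An operator $M$ is nonresonant in $X$ if $Mu=0$ a.e., $u\in X$ forces $u\equiv0$; its Green's function $G$ then gives the unique solution $u(t)=\int G(t,s)\sigma(s)ds$ of $Mu=\sigma$, $u\in X$. $X_{D,T}=\{u\in W^{2n,1}(I): u^{(2k)}(0)=u^{(2k)}(T)=0,\ k=0,\dots,n-1\}$ and $X_{M_2,T}=\{u\in W^{2n,1}(I): u^{(2k)}(0)=u^{(2k+1)}(T)=0,\ k=0,\dots,n-1\}$; $G_D[T]$, $G_{M_2}[T]$ are the Green's functions of $L$ on these spaces. $G_D[2T]$: Green's function of $\widetilde L$ on $\{u\in W^{2n,1}(J): u^{(2k)}(0)=u^{(2k)}(2T)=0,\ k=0,\dots,n-1\}$. *)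

theory Defs
  imports "HOL-Analysis.Analysis"
begin

definition abs_cont_on :: "real set \<Rightarrow> (real \<Rightarrow> real) \<Rightarrow> bool" where
  "abs_cont_on K f \<longleftrightarrow>
     (\<forall>\<epsilon>>0. \<exists>\<delta>>0. \<forall>(N::nat) (a::nat \<Rightarrow> real) (b::nat \<Rightarrow> real).
        (\<forall>i<N. a i \<le> b i \<and> {a i..b i} \<subseteq> K) \<and>
        (\<forall>i<N. \<forall>j<N. i \<noteq> j \<longrightarrow> b i \<le> a j \<or> b j \<le> a i) \<and>
        (\<Sum>i<N. b i - a i) < \<delta>
        \<longrightarrow> (\<Sum>i<N. \<bar>f (b i) - f (a i)\<bar>) < \<epsilon>)"

definition in_Lp :: "real \<Rightarrow> real set \<Rightarrow> (real \<Rightarrow> real) \<Rightarrow> bool" where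
  "in_Lp p K f \<longleftrightarrow> f measurable_on K \<and> (\<lambda>t. \<bar>f t\<bar> powr p) integrable_on K"

text \<open>W^{m,1}(K) with m = 2n: Du k is the k-th derivative of u (derivatives taken
  within K) for k \<le> m-1, Du (m-1) is absolutely continuous on K, and Du m is its
  derivative, which exists almost everywhere in K.\<close>
definition W_m1 :: "nat \<Rightarrow> real set \<Rightarrow> (real \<Rightarrow> real) \<Rightarrow> (nat \<Rightarrow> real \<Rightarrow> real) \<Rightarrow> bool" where
  "W_m1 m K u Du \<longleftrightarrow>
     (\<forall>t\<in>K. Du 0 t = u t) \<and>
     (\<forall>k<m - 1. \<forall>t\<in>K. (Du k has_real_derivative Du (Suc k) t) (at t within K)) \<and>
     abs_cont_on K (Du (m - 1)) \<and>
     (AE t in lebesgue. t \<in> K \<longrightarrow> (Du (m - 1) has_real_derivative Du m t) (at t))"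

definition solves :: "nat \<Rightarrow> real set \<Rightarrow> (nat \<Rightarrow> real \<Rightarrow> real) \<Rightarrow>
    ((nat \<Rightarrow> real \<Rightarrow> real) \<Rightarrow> bool) \<Rightarrow> (real \<Rightarrow> real) \<Rightarrow> (real \<Rightarrow> real) \<Rightarrow> bool" where
  "solves m K c bc \<sigma> u \<longleftrightarrow>
     (\<exists>Du. W_m1 m K u Du \<and> bc Du \<and>
        (AE t in lebesgue. t \<in> K \<longrightarrow> Du m t + (\<Sum>k<m. c k t * Du k t) = \<sigma> t))"

definition nonresonant :: "nat \<Rightarrow> real set \<Rightarrow> (nat \<Rightarrow> real \<Rightarrow> real) \<Rightarrow>
    ((nat \<Rightarrow> real \<Rightarrow> real) \<Rightarrow> bool) \<Rightarrow> bool" where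
  "nonresonant m K c bc \<longleftrightarrow> (\<forall>u. solves m K c bc (\<lambda>_. 0) u \<longrightarrow> (\<forall>t\<in>K. u t = 0))"

definition green :: "nat \<Rightarrow> real set \<Rightarrow> (nat \<Rightarrow> real \<Rightarrow> real) \<Rightarrow>
    ((nat \<Rightarrow> real \<Rightarrow> real) \<Rightarrow> bool) \<Rightarrow> (real \<Rightarrow> real \<Rightarrow> real) \<Rightarrow> bool" where
  "green m K c bc G \<longleftrightarrow> nonresonant m K c bc \<and>
     (\<forall>\<sigma>. \<sigma> absolutely_integrable_on K \<longrightarrow>
        (\<forall>t\<in>K. (\<lambda>s. G t s * \<sigma> s) integrable_on K) \<and>
        solves m K c bc \<sigma> (\<lambda>t. integral K (\<lambda>s. G t s * \<sigma> s)))"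

definition bc_D :: "nat \<Rightarrow> real \<Rightarrow> (nat \<Rightarrow> real \<Rightarrow> real) \<Rightarrow> bool" where
  "bc_D n S Du \<longleftrightarrow> (\<forall>k<n. Du (2*k) 0 = 0 \<and> Du (2*k) S = 0)"

definition bc_M2 :: "nat \<Rightarrow> real \<Rightarrow> (nat \<Rightarrow> real \<Rightarrow> real) \<Rightarrow> bool" where
  "bc_M2 n S Du \<longleftrightarrow> (\<forall>k<n. Du (2*k) 0 = 0 \<and> Du (2*k+1) S = 0)"

text \<open>Coefficients of the reflected operator tilde L on [0,2T]: even coefficients are
  reflected evenly, odd ones oddly.\<close>
definition refl_coef :: "real \<Rightarrow> (nat \<Rightarrow> real \<Rightarrow> real) \<Rightarrow> nat \<Rightarrow> real \<Rightarrow> real" where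
  "refl_coef T a k t =
     (if t \<le> T then a k t
      else if even k then a k (2*T - t) else - a k (2*T - t))"

end

theory Submission
  imports Defs
begin

definition ivfam :: "real set \<Rightarrow> nat \<Rightarrow> (nat \<Rightarrow> real) \<Rightarrow> (nat \<Rightarrow> real) \<Rightarrow> real \<Rightarrow> bool" where
  "ivfam K N a b d \<longleftrightarrow> (\<forall>i<N. a i \<le> b i \<and> {a i..b i} \<subseteq> K) \<and>
        (\<forall>i<N. \<forall>j<N. i \<noteq> j \<longrightarrow> b i \<le> a j \<or> b j \<le> a i) \<and>
        (\<Sum>i<N. b i - a i) < d"

lemma abs_cont_on_iff: "abs_cont_on K f \<longleftrightarrow> (\<forall>e>0. \<exists>d>0. \<forall>N a b. ivfam K N a b d \<longrightarrow> (\<Sum>i<N. \<bar>f (b i) - f (a i)\<bar>) < e)"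
  unfolding abs_cont_on_def ivfam_def by simp

lemma abs_cont_transform:
  assumes "abs_cont_on K f" "\<And>t. t \<in> K \<Longrightarrow> g t = f t"
  shows "abs_cont_on K g"
  unfolding abs_cont_on_iff
proof (intro allI impI)
  fix e :: real assume "e > 0"
  then obtain d where d: "d > 0" and H: "\<And>N a b. ivfam K N a b d \<Longrightarrow> (\<Sum>i<N. \<bar>f (b i) - f (a i)\<bar>) < e"
    using assms(1) unfolding abs_cont_on_iff by blast
  show "\<exists>d>0. \<forall>N a b. ivfam K N a b d \<longrightarrow> (\<Sum>i<N. \<bar>g (b i) - g (a i)\<bar>) < e"
  proof (rule exI[of _ d], intro conjI allI impI d)
    fix N and a b :: "nat \<Rightarrow> real"
    assume P: "ivfam K N a b d"
    have "(\<Sum>i<N. \<bar>g (b i) - g (a i)\<bar>) = (\<Sum>i<N. \<bar>f (b i) - f (a i)\<bar>)"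
    proof (rule sum.cong)
      fix i assume "i \<in> {..<N}"
      with P have "a i \<le> b i" "{a i..b i} \<subseteq> K" unfolding ivfam_def by auto
      then have "a i \<in> K" "b i \<in> K" by auto
      then show "\<bar>g (b i) - g (a i)\<bar> = \<bar>f (b i) - f (a i)\<bar>" using assms(2) by simp
    qed simp
    with H P show "(\<Sum>i<N. \<bar>g (b i) - g (a i)\<bar>) < e" by metis
  qed
qed

lemma abs_cont_lin:
  assumes "abs_cont_on K f" "abs_cont_on K g"
  shows "abs_cont_on K (\<lambda>t. f t + p * g t)"
  unfolding abs_cont_on_iff
proof (intro allI impI)
  fix e :: real assume e: "e > 0"
  have e1: "e/2 > 0" using e by simp
  obtain d1 where d1: "d1 > 0" and H1: "\<And>N a b. ivfam K N a b d1 \<Longrightarrow> (\<Sum>i<N. \<bar>f (b i) - f (a i)\<bar>) < e/2"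
    using assms(1) e1 unfolding abs_cont_on_iff by blast
  have e2: "e / (2 * (\<bar>p\<bar> + 1)) > 0" using e by (simp add: add_pos_nonneg)
  obtain d2 where d2: "d2 > 0" and H2: "\<And>N a b. ivfam K N a b d2 \<Longrightarrow> (\<Sum>i<N. \<bar>g (b i) - g (a i)\<bar>) < e / (2 * (\<bar>p\<bar> + 1))"
    using assms(2) e2 unfolding abs_cont_on_iff by blast
  show "\<exists>d>0. \<forall>N a b. ivfam K N a b d \<longrightarrow> (\<Sum>i<N. \<bar>(f (b i) + p * g (b i)) - (f (a i) + p * g (a i))\<bar>) < e"
  proof (rule exI[of _ "min d1 d2"], intro conjI allI impI)
    show "min d1 d2 > 0" using d1 d2 by simp
    fix N and a b :: "nat \<Rightarrow> real"
    assume P: "ivfam K N a b (min d1 d2)"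
    have s1: "(\<Sum>i<N. \<bar>f (b i) - f (a i)\<bar>) < e/2" using H1 P unfolding ivfam_def by auto
    have s2: "(\<Sum>i<N. \<bar>g (b i) - g (a i)\<bar>) < e / (2 * (\<bar>p\<bar> + 1))" using H2 P unfolding ivfam_def by auto
    have "(\<Sum>i<N. \<bar>(f (b i) + p * g (b i)) - (f (a i) + p * g (a i))\<bar>)
        \<le> (\<Sum>i<N. \<bar>f (b i) - f (a i)\<bar> + \<bar>p\<bar> * \<bar>g (b i) - g (a i)\<bar>)"
    proof (rule sum_mono)
      fix i
      have "(f (b i) + p * g (b i)) - (f (a i) + p * g (a i)) = (f (b i) - f (a i)) + p * (g (b i) - g (a i))"
        by (simp add: algebra_simps)
      then show "\<bar>(f (b i) + p * g (b i)) - (f (a i) + p * g (a i))\<bar> \<le> \<bar>f (b i) - f (a i)\<bar> + \<bar>p\<bar> * \<bar>g (b i) - g (a i)\<bar>"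
        by (metis abs_mult abs_triangle_ineq)
    qed
    also have "\<dots> = (\<Sum>i<N. \<bar>f (b i) - f (a i)\<bar>) + \<bar>p\<bar> * (\<Sum>i<N. \<bar>g (b i) - g (a i)\<bar>)"
      by (simp add: sum.distrib sum_distrib_left)
    also have "\<dots> \<le> (\<Sum>i<N. \<bar>f (b i) - f (a i)\<bar>) + \<bar>p\<bar> * (e / (2 * (\<bar>p\<bar> + 1)))"
      using s2 by (intro add_left_mono mult_left_mono) auto
    also have "\<bar>p\<bar> * (e / (2 * (\<bar>p\<bar> + 1))) \<le> e/2"
    proof -
      have "\<bar>p\<bar> * (e / (2 * (\<bar>p\<bar> + 1))) = (e/2) * (\<bar>p\<bar> / (\<bar>p\<bar> + 1))" by (simp add: field_simps)
      also have "\<dots> \<le> (e/2) * 1" using e by (intro mult_left_mono) auto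
      finally show ?thesis by simp
    qed
    finally show "(\<Sum>i<N. \<bar>(f (b i) + p * g (b i)) - (f (a i) + p * g (a i))\<bar>) < e" using s1 by linarith
  qed
qed

lemma abs_cont_const: "abs_cont_on K (\<lambda>_. c)"
  unfolding abs_cont_on_iff by (auto intro: exI[of _ 1])

lemma abs_cont_scale:
  assumes "abs_cont_on K g" shows "abs_cont_on K (\<lambda>t. p * g t)"
  using abs_cont_lin[OF abs_cont_const assms, of 0 p] by simp

lemma abs_cont_reflect:
  assumes "abs_cont_on {x..y} f"
  shows "abs_cont_on {c-y..c-x} (\<lambda>t. f (c - t))"
  unfolding abs_cont_on_iff
proof (intro allI impI)
  fix e :: real assume "e > 0"
  then obtain d where d: "d > 0" and H: "\<And>N a b. ivfam {x..y} N a b d \<Longrightarrow> (\<Sum>i<N. \<bar>f (b i) - f (a i)\<bar>) < e"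
    using assms(1) unfolding abs_cont_on_iff by blast
  show "\<exists>d>0. \<forall>N a b. ivfam {c-y..c-x} N a b d \<longrightarrow> (\<Sum>i<N. \<bar>f (c - b i) - f (c - a i)\<bar>) < e"
  proof (rule exI[of _ d], intro conjI allI impI d)
    fix N and a b :: "nat \<Rightarrow> real"
    assume P: "ivfam {c-y..c-x} N a b d"
    have "ivfam {x..y} N (\<lambda>i. c - b i) (\<lambda>i. c - a i) d"
      unfolding ivfam_def
    proof (intro conjI allI impI)
      fix i assume i: "i < N"
      then have "a i \<le> b i" "{a i..b i} \<subseteq> {c-y..c-x}" using P unfolding ivfam_def by auto
      then show "c - b i \<le> c - a i" "{c - b i..c - a i} \<subseteq> {x..y}" by auto
    next
      fix i j assume "i < N" "j < N" "i \<noteq> j"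
      then have "b i \<le> a j \<or> b j \<le> a i" using P unfolding ivfam_def by auto
      then show "c - a i \<le> c - b j \<or> c - a j \<le> c - b i" by auto
    next
      have "(\<Sum>i<N. (c - a i) - (c - b i)) = (\<Sum>i<N. b i - a i)" by simp
      then show "(\<Sum>i<N. (c - a i) - (c - b i)) < d" using P unfolding ivfam_def by simp
    qed
    then have "(\<Sum>i<N. \<bar>f (c - a i) - f (c - b i)\<bar>) < e" by (rule H)
    moreover have "(\<Sum>i<N. \<bar>f (c - b i) - f (c - a i)\<bar>) = (\<Sum>i<N. \<bar>f (c - a i) - f (c - b i)\<bar>)"
      by (simp add: abs_minus_commute)
    ultimately show "(\<Sum>i<N. \<bar>f (c - b i) - f (c - a i)\<bar>) < e" by simp
  qed
qed

lemma abs_cont_union: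
  assumes f1: "abs_cont_on {x..y} f" and f2: "abs_cont_on {y..z} f" and xy: "x \<le> y" and yz: "y \<le> z"
  shows "abs_cont_on {x..z} f"
  unfolding abs_cont_on_iff
proof (intro allI impI)
  fix e :: real assume e: "e > 0"
  have e1: "e/2 > 0" using e by simp
  obtain d1 where d1: "d1 > 0" and H1: "\<And>N a b. ivfam {x..y} N a b d1 \<Longrightarrow> (\<Sum>i<N. \<bar>f (b i) - f (a i)\<bar>) < e/2"
    using f1 e1 unfolding abs_cont_on_iff by blast
  obtain d2 where d2: "d2 > 0" and H2: "\<And>N a b. ivfam {y..z} N a b d2 \<Longrightarrow> (\<Sum>i<N. \<bar>f (b i) - f (a i)\<bar>) < e/2"
    using f2 e1 unfolding abs_cont_on_iff by blast
  show "\<exists>d>0. \<forall>N a b. ivfam {x..z} N a b d \<longrightarrow> (\<Sum>i<N. \<bar>f (b i) - f (a i)\<bar>) < e"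
  proof (rule exI[of _ "min d1 d2"], intro conjI allI impI)
    show "min d1 d2 > 0" using d1 d2 by simp
    fix N and a b :: "nat \<Rightarrow> real"
    assume P: "ivfam {x..z} N a b (min d1 d2)"
    have ab: "\<And>i. i < N \<Longrightarrow> a i \<le> b i \<and> x \<le> a i \<and> b i \<le> z"
    proof -
      fix i assume "i < N"
      then have "a i \<le> b i" "{a i..b i} \<subseteq> {x..z}" using P unfolding ivfam_def by auto
      then show "a i \<le> b i \<and> x \<le> a i \<and> b i \<le> z" by auto
    qed
    have dis: "\<And>i j. i < N \<Longrightarrow> j < N \<Longrightarrow> i \<noteq> j \<Longrightarrow> b i \<le> a j \<or> b j \<le> a i"
      using P unfolding ivfam_def by auto
    have sm: "(\<Sum>i<N. b i - a i) < min d1 d2" using P unfolding ivfam_def by auto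
    have I1: "ivfam {x..y} N (\<lambda>i. min (a i) y) (\<lambda>i. min (b i) y) d1"
      unfolding ivfam_def
    proof (intro conjI allI impI)
      fix i assume "i < N" then have "a i \<le> b i \<and> x \<le> a i \<and> b i \<le> z" by (rule ab)
      then show "min (a i) y \<le> min (b i) y" "{min (a i) y..min (b i) y} \<subseteq> {x..y}" using xy by auto
    next
      fix i j assume "i < N" "j < N" "i \<noteq> j"
      then have "b i \<le> a j \<or> b j \<le> a i" by (rule dis)
      then show "min (b i) y \<le> min (a j) y \<or> min (b j) y \<le> min (a i) y" by auto
    next
      have "(\<Sum>i<N. min (b i) y - min (a i) y) \<le> (\<Sum>i<N. b i - a i)"
      proof (rule sum_mono)
        fix i assume "i \<in> {..<N}" then have "a i \<le> b i" using ab by auto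
        then show "min (b i) y - min (a i) y \<le> b i - a i" by (simp add: min_def max_def)
      qed
      then show "(\<Sum>i<N. min (b i) y - min (a i) y) < d1" using sm by linarith
    qed
    have I2: "ivfam {y..z} N (\<lambda>i. max (a i) y) (\<lambda>i. max (b i) y) d2"
      unfolding ivfam_def
    proof (intro conjI allI impI)
      fix i assume "i < N" then have "a i \<le> b i \<and> x \<le> a i \<and> b i \<le> z" by (rule ab)
      then show "max (a i) y \<le> max (b i) y" "{max (a i) y..max (b i) y} \<subseteq> {y..z}" using yz by auto
    next
      fix i j assume "i < N" "j < N" "i \<noteq> j"
      then have "b i \<le> a j \<or> b j \<le> a i" by (rule dis)
      then show "max (b i) y \<le> max (a j) y \<or> max (b j) y \<le> max (a i) y" by auto
    next
      have "(\<Sum>i<N. max (b i) y - max (a i) y) \<le> (\<Sum>i<N. b i - a i)"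
      proof (rule sum_mono)
        fix i assume "i \<in> {..<N}" then have "a i \<le> b i" using ab by auto
        then show "max (b i) y - max (a i) y \<le> b i - a i" by (simp add: min_def max_def)
      qed
      then show "(\<Sum>i<N. max (b i) y - max (a i) y) < d2" using sm by linarith
    qed
    have "(\<Sum>i<N. \<bar>f (b i) - f (a i)\<bar>) \<le>
        (\<Sum>i<N. \<bar>f (min (b i) y) - f (min (a i) y)\<bar> + \<bar>f (max (b i) y) - f (max (a i) y)\<bar>)"
    proof (rule sum_mono)
      fix i assume "i \<in> {..<N}"
      then have "a i \<le> b i" using ab by auto
      then consider "b i \<le> y" | "y \<le> a i" | "a i < y \<and> y < b i" by linarith
      then show "\<bar>f (b i) - f (a i)\<bar> \<le> \<bar>f (min (b i) y) - f (min (a i) y)\<bar> + \<bar>f (max (b i) y) - f (max (a i) y)\<bar>"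
      proof cases
        case 1 then show ?thesis using \<open>a i \<le> b i\<close> by (simp add: min_def max_def)
      next
        case 2 then show ?thesis using \<open>a i \<le> b i\<close> by (simp add: min_def max_def)
      next
        case 3
        then have "min (b i) y = y" "min (a i) y = a i" "max (b i) y = b i" "max (a i) y = y" by auto
        then show ?thesis by simp
      qed
    qed
    also have "\<dots> = (\<Sum>i<N. \<bar>f (min (b i) y) - f (min (a i) y)\<bar>) + (\<Sum>i<N. \<bar>f (max (b i) y) - f (max (a i) y)\<bar>)"
      by (rule sum.distrib)
    also have "\<dots> < e/2 + e/2" using H1[OF I1] H2[OF I2] by linarith
    finally show "(\<Sum>i<N. \<bar>f (b i) - f (a i)\<bar>) < e" by simp
  qed
qed

lemma negl_reflect:
  fixes S :: "real set"
  assumes "negligible S" shows "negligible ((\<lambda>t. c - t) ` S)"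
proof (rule negligible_locally_Lipschitz_image[OF _ assms])
  fix x assume "x \<in> S"
  show "\<exists>T B. open T \<and> x \<in> T \<and> (\<forall>y\<in>S \<inter> T. norm ((c - y) - (c - x)) \<le> B * norm (y - x))"
  proof (rule exI[of _ UNIV], rule exI[of _ 1], intro conjI ballI)
    fix y show "norm ((c - y) - (c - x)) \<le> 1 * norm (y - x)"
      by (simp add: abs_minus_commute)
  qed auto
qed (simp add: DIM_real)

lemma AE_reflect:
  fixes P :: "real \<Rightarrow> bool"
  assumes "AE t in lebesgue. P t"
  shows "AE t in lebesgue. P (c - t)"
proof -
  obtain N where N: "N \<in> null_sets lebesgue" "{x \<in> space lebesgue. \<not> P x} \<subseteq> N"
    using assms unfolding eventually_ae_filter by blast
  have "negligible N" using N(1) by (simp only: negligible_iff_null_sets)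
  then have "negligible ((\<lambda>t. c - t) ` N)" by (rule negl_reflect)
  then have NN: "(\<lambda>t. c - t) ` N \<in> null_sets lebesgue" by (simp only: negligible_iff_null_sets)
  have "{x \<in> space lebesgue. \<not> P (c - x)} \<subseteq> (\<lambda>t. c - t) ` N"
  proof
    fix x assume "x \<in> {x \<in> space lebesgue. \<not> P (c - x)}"
    then have "c - x \<in> N" using N(2) by auto
    then show "x \<in> (\<lambda>t. c - t) ` N" by (rule rev_image_eqI) simp
  qed
  then show ?thesis unfolding eventually_ae_filter using NN by blast
qed

lemma AE_neq: "AE t in lebesgue. t \<noteq> (c::real)"
proof -
  have "{c} \<in> null_sets lebesgue" using negligible_sing negligible_iff_null_sets by blast
  moreover have "{x \<in> space lebesgue. \<not> x \<noteq> c} \<subseteq> {c}" by auto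
  ultimately show ?thesis unfolding eventually_ae_filter by blast
qed

lemma img_refl: "(\<lambda>x. (1 / -1) *\<^sub>R x + -((1 / -1) *\<^sub>R (2*T))) ` cbox 0 T = {T..2*(T::real)}"
proof -
  have e: "(\<lambda>x::real. (1 / -1) *\<^sub>R x + -((1 / -1) *\<^sub>R (2*T))) = (\<lambda>x. 2*T - x)" by (rule ext) simp
  have "(\<lambda>x. 2*T - x) ` {0..T} = {T..2*T}"
  proof
    show "(\<lambda>x. 2*T - x) ` {0..T} \<subseteq> {T..2*T}" by auto
    show "{T..2*T} \<subseteq> (\<lambda>x. 2*T - x) ` {0..T}"
    proof
      fix x assume "x \<in> {T..2*T}"
      then have "2*T - x \<in> {0..T}" "x = 2*T - (2*T - x)" by auto
      then show "x \<in> (\<lambda>x. 2*T - x) ` {0..T}" by blast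
    qed
  qed
  then show ?thesis unfolding e by simp
qed

lemma absint_reflect:
  fixes \<sigma> :: "real \<Rightarrow> real"
  assumes "\<sigma> absolutely_integrable_on {0..T}" "T > 0"
  shows "(\<lambda>t. if t \<le> T then \<sigma> t else s * \<sigma> (2*T - t)) absolutely_integrable_on {0..2*T}"
proof -
  have i1: "\<sigma> integrable_on cbox 0 T" "(\<lambda>x. norm (\<sigma> x)) integrable_on cbox 0 T"
    using assms(1) unfolding absolutely_integrable_on_def by auto
  have e1: "(\<lambda>x. \<sigma> ((-1) *\<^sub>R x + 2*T)) = (\<lambda>x. \<sigma> (2*T - x))" by (rule ext) simp
  have e2: "(\<lambda>x. norm (\<sigma> ((-1) *\<^sub>R x + 2*T))) = (\<lambda>x. norm (\<sigma> (2*T - x)))" by (rule ext) simp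
  have "(\<lambda>x. \<sigma> (2*T - x)) integrable_on {T..2*T}"
    using integrable_affinity[OF i1(1), of "-1" "2*T"] unfolding img_refl e1 by simp
  moreover have "(\<lambda>x. norm (\<sigma> (2*T - x))) integrable_on {T..2*T}"
    using integrable_affinity[OF i1(2), of "-1" "2*T"] unfolding img_refl e2 by simp
  ultimately have r0: "(\<lambda>x. \<sigma> (2*T - x)) absolutely_integrable_on {T..2*T}"
    unfolding absolutely_integrable_on_def by simp
  have r: "(\<lambda>x. s * \<sigma> (2*T - x)) absolutely_integrable_on {T..2*T}"
    by (rule set_integrable_mult_right) (rule r0)
  have A: "(\<lambda>t. if t \<le> T then \<sigma> t else s * \<sigma> (2*T - t)) absolutely_integrable_on {0..T}"
    by (rule absolutely_integrable_spike[OF assms(1), of "{}"]) auto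
  have B: "(\<lambda>t. if t \<le> T then \<sigma> t else s * \<sigma> (2*T - t)) absolutely_integrable_on {T..2*T}"
    by (rule absolutely_integrable_spike[OF r, of "{T}"]) auto
  have "{0..T} \<union> {T..2*T} = {0..2*T}" using assms(2) by auto
  then show ?thesis using absolutely_integrable_Un[OF A B] by simp
qed

lemma refl_deriv_piece:
  fixes f f' :: "real \<Rightarrow> real"
  assumes T: "T > 0" and D: "\<And>x. x \<in> {0..T} \<Longrightarrow> (f has_real_derivative f' x) (at x within {0..T})"
    and t: "t \<in> {T..2*T}"
  shows "((\<lambda>x. r * f (2*T - x)) has_real_derivative (- r * f' (2*T - t))) (at t within {T..2*T})"
proof -
  have img: "(\<lambda>x. 2*T - x) ` {T..2*T} = {0..T}"
  proof
    show "(\<lambda>x. 2*T - x) ` {T..2*T} \<subseteq> {0..T}" by auto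
    show "{0..T} \<subseteq> (\<lambda>x. 2*T - x) ` {T..2*T}"
    proof
      fix x assume "x \<in> {0..T}"
      then have "2*T - x \<in> {T..2*T}" "x = 2*T - (2*T - x)" by auto
      then show "x \<in> (\<lambda>x. 2*T - x) ` {T..2*T}" by blast
    qed
  qed
  have "2*T - t \<in> {0..T}" using t by auto
  then have d1: "(f has_real_derivative f' (2*T - t)) (at ((\<lambda>x. 2*T - x) t) within ((\<lambda>x. 2*T - x) ` {T..2*T}))"
    using D img by simp
  have d2: "((\<lambda>x. 2*T - x) has_real_derivative -1) (at t within {T..2*T})"
    by (auto intro!: derivative_eq_intros)
  have "(f \<circ> (\<lambda>x. 2*T - x) has_real_derivative f' (2*T - t) * -1) (at t within {T..2*T})"
    by (rule DERIV_image_chain[OF d1 d2])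
  then have "((\<lambda>x. r * (f \<circ> (\<lambda>x. 2*T - x)) x) has_real_derivative r * (f' (2*T - t) * -1)) (at t within {T..2*T})"
    by (rule DERIV_cmult)
  then show ?thesis by (simp add: o_def)
qed

lemma glue_deriv:
  fixes f f' :: "real \<Rightarrow> real"
  assumes T: "T > 0" and D: "\<And>x. x \<in> {0..T} \<Longrightarrow> (f has_real_derivative f' x) (at x within {0..T})"
    and g0: "f T = r * f T" and g1: "f' T = - r * f' T"
    and t: "t \<in> {0..2*T}"
  shows "((\<lambda>x. if x \<le> T then f x else r * f (2*T - x)) has_real_derivative
           (if t \<le> T then f' t else - r * f' (2*T - t))) (at t within {0..2*T})"
proof -
  let ?g = "\<lambda>x. if x \<le> T then f x else r * f (2*T - x)"
  have left: "(?g has_real_derivative f' t) (at t within {0..T})" if "t \<in> {0..T}" for t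
    by (rule has_field_derivative_transform_within[OF D[OF that], of 1]) (use that in auto)
  have right: "(?g has_real_derivative (- r * f' (2*T - t))) (at t within {T..2*T})" if "t \<in> {T..2*T}" for t
  proof (rule has_field_derivative_transform_within[OF refl_deriv_piece[OF T D that], of 1])
    fix x assume "x \<in> {T..2*T}"
    then show "r * f (2*T - x) = ?g x" using g0 by (cases "x = T") auto
  qed (use that in auto)
  consider "t < T" | "t = T" | "t > T" by linarith
  then show ?thesis
  proof cases
    case 1
    have "at t within {0..2*T} = at t within {0..T}"
      by (rule at_within_nhd[of _ "{..<T}"]) (use 1 t in auto)
    then show ?thesis using left[of t] 1 t by auto
  next
    case 3
    have "at t within {0..2*T} = at t within {T..2*T}"
      by (rule at_within_nhd[of _ "{T<..}"]) (use 3 t in auto)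
    then show ?thesis using right[of t] 3 t by auto
  next
    case 2
    have L: "(?g has_real_derivative f' T) (at T within {0..T})" using left[of T] T by auto
    have R: "(?g has_real_derivative f' T) (at T within {T..2*T})" using right[of T] T g1 by auto
    have U: "{0..2*T} = {0..T} \<union> {T..2*T}" using T by auto
    have "(?g has_real_derivative f' T) (at T within {0..T} \<union> {T..2*T})"
      using L R unfolding has_field_derivative_iff Lim_within_Un by blast
    then show ?thesis using 2 U by simp
  qed
qed

lemma glue_deriv_at:
  fixes f f' :: "real \<Rightarrow> real"
  assumes t: "t \<noteq> T"
    and L: "t < T \<Longrightarrow> (f has_real_derivative f' t) (at t)"
    and R: "t > T \<Longrightarrow> (f has_real_derivative f' (2*T - t)) (at (2*T - t))"
  shows "((\<lambda>x. if x \<le> T then f x else r * f (2*T - x)) has_real_derivative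
           (if t \<le> T then f' t else - r * f' (2*T - t))) (at t)"
proof (cases "t < T")
  case True
  have "((\<lambda>x. if x \<le> T then f x else r * f (2*T - x)) has_real_derivative f' t) (at t)"
    by (rule has_field_derivative_transform_within_open[OF L[OF True], of "{..<T}"]) (use True in auto)
  then show ?thesis using True by simp
next
  case False
  then have tT: "t > T" using t by auto
  have d2: "((\<lambda>x. 2*T - x) has_real_derivative -1) (at t)"
    by (auto intro!: derivative_eq_intros)
  have "((\<lambda>x. f (2*T - x)) has_real_derivative f' (2*T - t) * -1) (at t)"
    using DERIV_chain[OF R[OF tT] d2] by (simp add: o_def)
  then have "((\<lambda>x. r * f (2*T - x)) has_real_derivative r * (f' (2*T - t) * -1)) (at t)"
    by (rule DERIV_cmult)
  then have "((\<lambda>x. r * f (2*T - x)) has_real_derivative - r * f' (2*T - t)) (at t)" by simp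
  then have "((\<lambda>x. if x \<le> T then f x else r * f (2*T - x)) has_real_derivative - r * f' (2*T - t)) (at t)"
    by (rule has_field_derivative_transform_within_open[of _ _ _ "{T<..}"]) (use tT in auto)
  then show ?thesis using tT by simp
qed

lemma reflect_solves:
  fixes u \<sigma> :: "real \<Rightarrow> real" and Du :: "nat \<Rightarrow> real \<Rightarrow> real" and a :: "nat \<Rightarrow> real \<Rightarrow> real"
  assumes n: "n \<ge> 1" and T: "T > 0" and s: "s = 1 \<or> s = -1"
    and W: "W_m1 (2*n) {0..T} u Du"
    and bc0: "\<forall>k<n. Du (2*k) 0 = 0"
    and glue: "\<forall>k<2*n. Du k T = s * (-1)^k * Du k T"
    and eq: "AE t in lebesgue. t \<in> {0..T} \<longrightarrow> Du (2*n) t + (\<Sum>k<2*n. a k t * Du k t) = \<sigma> t"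
  shows "solves (2*n) {0..2*T} (refl_coef T a) (bc_D n (2*T))
           (\<lambda>t. if t \<le> T then \<sigma> t else s * \<sigma> (2*T - t))
           (\<lambda>t. if t \<le> T then u t else s * u (2*T - t))"
proof -
  define m where "m = 2*n"
  define E where "E k t = (if t \<le> T then Du k t else s * (-1)^k * Du k (2*T - t))" for k t
  have W0: "\<forall>t\<in>{0..T}. Du 0 t = u t"
    and W1: "\<forall>k<m - 1. \<forall>t\<in>{0..T}. (Du k has_real_derivative Du (Suc k) t) (at t within {0..T})"
    and W2: "abs_cont_on {0..T} (Du (m - 1))"
    and W3: "AE t in lebesgue. t \<in> {0..T} \<longrightarrow> (Du (m - 1) has_real_derivative Du m t) (at t)"
    using W unfolding W_m1_def m_def by auto
  have m1: "m - 1 < m" "m \<ge> 2" using n unfolding m_def by auto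
  have ev: "(-1::real)^m = 1" "(-1::real)^(m-1) = -1" using n unfolding m_def by auto
  have E_def': "E k = (\<lambda>t. if t \<le> T then Du k t else (s * (-1)^k) * Du k (2*T - t))" for k
    unfolding E_def by (rule ext) simp
  have V0: "\<forall>t\<in>{0..2*T}. E 0 t = (if t \<le> T then u t else s * u (2*T - t))"
    using W0 unfolding E_def by auto
  have V1: "\<forall>k<m - 1. \<forall>t\<in>{0..2*T}. (E k has_real_derivative E (Suc k) t) (at t within {0..2*T})"
  proof (intro allI impI ballI)
    fix k t assume k: "k < m - 1" and t: "t \<in> {0..2*T}"
    have g0: "Du k T = (s * (-1)^k) * Du k T" using glue k unfolding m_def by auto
    have g1: "Du (Suc k) T = - (s * (-1)^k) * Du (Suc k) T" using glue[rule_format, of "Suc k"] k unfolding m_def by auto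
    have "((\<lambda>x. if x \<le> T then Du k x else (s * (-1)^k) * Du k (2*T - x)) has_real_derivative
           (if t \<le> T then Du (Suc k) t else - (s * (-1)^k) * Du (Suc k) (2*T - t))) (at t within {0..2*T})"
      by (rule glue_deriv[of T "Du k" "Du (Suc k)" "s * (-1)^k" t, OF T _ g0 g1 t]) (use W1 k in auto)
    moreover have "(if t \<le> T then Du (Suc k) t else - (s * (-1)^k) * Du (Suc k) (2*T - t)) = E (Suc k) t"
      unfolding E_def by simp
    ultimately show "(E k has_real_derivative E (Suc k) t) (at t within {0..2*T})"
      unfolding E_def' by simp
  qed
  have V2: "abs_cont_on {0..2*T} (E (m - 1))"
  proof -
    have A1: "abs_cont_on {0..T} (E (m - 1))"
      by (rule abs_cont_transform[OF W2]) (simp add: E_def)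
    have "abs_cont_on {2*T - T..2*T - 0} (\<lambda>t. Du (m - 1) (2*T - t))"
      by (rule abs_cont_reflect[OF W2])
    then have "abs_cont_on {T..2*T} (\<lambda>t. Du (m - 1) (2*T - t))" by simp
    then have "abs_cont_on {T..2*T} (\<lambda>t. (s * (-1)^(m-1)) * Du (m - 1) (2*T - t))"
      by (rule abs_cont_scale)
    then have A2: "abs_cont_on {T..2*T} (E (m - 1))"
    proof (rule abs_cont_transform)
      fix t assume "t \<in> {T..2*T}"
      moreover have "Du (m-1) T = s * (-1)^(m-1) * Du (m-1) T" using glue m1(1) unfolding m_def by blast
      ultimately show "E (m - 1) t = s * (-1) ^ (m - 1) * Du (m - 1) (2 * T - t)"
        unfolding E_def by (cases "t = T") auto
    qed
    show ?thesis by (rule abs_cont_union[OF A1 A2]) (use T in auto)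
  qed
  have V3: "AE t in lebesgue. t \<in> {0..2*T} \<longrightarrow> (E (m - 1) has_real_derivative E m t) (at t)"
    using W3 AE_reflect[OF W3, of "2*T"] AE_neq[of T]
  proof eventually_elim
    case (elim t)
    show ?case
    proof
      assume t: "t \<in> {0..2*T}"
      have "((\<lambda>x. if x \<le> T then Du (m-1) x else (s * (-1)^(m-1)) * Du (m-1) (2*T - x)) has_real_derivative
           (if t \<le> T then Du m t else - (s * (-1)^(m-1)) * Du m (2*T - t))) (at t)"
        by (rule glue_deriv_at) (use elim t in auto)
      moreover have "(if t \<le> T then Du m t else - (s * (-1)^(m-1)) * Du m (2*T - t)) = E m t"
        unfolding E_def using ev by simp
      ultimately show "(E (m - 1) has_real_derivative E m t) (at t)"
        unfolding E_def' by simp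
    qed
  qed
  have Wn: "W_m1 (2*n) {0..2*T} (\<lambda>t. if t \<le> T then u t else s * u (2*T - t)) E"
    unfolding W_m1_def using V0 V1 V2 V3 unfolding m_def by blast
  have bcn: "bc_D n (2*T) E"
    unfolding bc_D_def E_def using bc0 T by auto
  have eqn: "AE t in lebesgue. t \<in> {0..2*T} \<longrightarrow> E m t + (\<Sum>k<m. refl_coef T a k t * E k t) =
             (if t \<le> T then \<sigma> t else s * \<sigma> (2*T - t))"
    using eq AE_reflect[OF eq, of "2*T"]
  proof eventually_elim
    case (elim t)
    show ?case
    proof
      assume t: "t \<in> {0..2*T}"
      show "E m t + (\<Sum>k<m. refl_coef T a k t * E k t) = (if t \<le> T then \<sigma> t else s * \<sigma> (2*T - t))"
      proof (cases "t \<le> T")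
        case True
        have "(\<Sum>k<m. refl_coef T a k t * E k t) = (\<Sum>k<m. a k t * Du k t)"
          using True unfolding refl_coef_def E_def by simp
        then show ?thesis using True elim t unfolding m_def E_def by auto
      next
        case False
        have "(\<Sum>k<m. refl_coef T a k t * E k t) = (\<Sum>k<m. s * (a k (2*T - t) * Du k (2*T - t)))"
        proof (rule sum.cong)
          fix k assume "k \<in> {..<m}"
          show "refl_coef T a k t * E k t = s * (a k (2*T - t) * Du k (2*T - t))"
            using False unfolding refl_coef_def E_def by (cases "even k") auto
        qed simp
        also have "\<dots> = s * (\<Sum>k<m. a k (2*T - t) * Du k (2*T - t))" by (simp add: sum_distrib_left)
        finally have S: "(\<Sum>k<m. refl_coef T a k t * E k t) = s * (\<Sum>k<m. a k (2*T - t) * Du k (2*T - t))" .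
        have Em: "E m t = s * Du m (2*T - t)" using False ev unfolding E_def by simp
        have "Du m (2*T - t) + (\<Sum>k<m. a k (2*T - t) * Du k (2*T - t)) = \<sigma> (2*T - t)"
          using elim(2) False t unfolding m_def by auto
        then have "s * Du m (2*T - t) + s * (\<Sum>k<m. a k (2*T - t) * Du k (2*T - t)) = s * \<sigma> (2*T - t)"
          by (metis distrib_left)
        then show ?thesis using S Em False by simp
      qed
    qed
  qed
  show ?thesis
    unfolding solves_def using Wn bcn eqn unfolding m_def by blast
qed

lemma solves_lin:
  assumes "solves m K c (bc_D n S) \<sigma> u" "solves m K c (bc_D n S) \<tau> v"
  shows "solves m K c (bc_D n S) (\<lambda>t. \<sigma> t + p * \<tau> t) (\<lambda>t. u t + p * v t)"
proof -
  obtain Du where U: "W_m1 m K u Du" "bc_D n S Du"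
      "AE t in lebesgue. t \<in> K \<longrightarrow> Du m t + (\<Sum>k<m. c k t * Du k t) = \<sigma> t"
    using assms(1) unfolding solves_def by blast
  obtain Dv where V: "W_m1 m K v Dv" "bc_D n S Dv"
      "AE t in lebesgue. t \<in> K \<longrightarrow> Dv m t + (\<Sum>k<m. c k t * Dv k t) = \<tau> t"
    using assms(2) unfolding solves_def by blast
  define F where "F k t = Du k t + p * Dv k t" for k t
  have F': "F k = (\<lambda>t. Du k t + p * Dv k t)" for k unfolding F_def by (rule ext) simp
  have W: "W_m1 m K (\<lambda>t. u t + p * v t) F"
    unfolding W_m1_def
  proof (intro conjI allI impI ballI)
    show "\<And>t. t \<in> K \<Longrightarrow> F 0 t = u t + p * v t" using U(1) V(1) unfolding W_m1_def F_def by auto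
  next
    fix k t assume k: "k < m - 1" and t: "t \<in> K"
    have "(Du k has_real_derivative Du (Suc k) t) (at t within K)"
      "(Dv k has_real_derivative Dv (Suc k) t) (at t within K)"
      using U(1) V(1) k t unfolding W_m1_def by auto
    then have "((\<lambda>t. Du k t + p * Dv k t) has_real_derivative Du (Suc k) t + p * Dv (Suc k) t) (at t within K)"
      by (intro DERIV_add DERIV_cmult)
    then show "(F k has_real_derivative F (Suc k) t) (at t within K)" unfolding F' by simp
  next
    have "abs_cont_on K (Du (m-1))" "abs_cont_on K (Dv (m-1))" using U(1) V(1) unfolding W_m1_def by auto
    then show "abs_cont_on K (F (m - 1))" unfolding F' by (rule abs_cont_lin)
  next
    have a1: "AE t in lebesgue. t \<in> K \<longrightarrow> (Du (m - 1) has_real_derivative Du m t) (at t)"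
      using U(1) unfolding W_m1_def by auto
    have a2: "AE t in lebesgue. t \<in> K \<longrightarrow> (Dv (m - 1) has_real_derivative Dv m t) (at t)"
      using V(1) unfolding W_m1_def by auto
    show "AE t in lebesgue. t \<in> K \<longrightarrow> (F (m - 1) has_real_derivative F m t) (at t)"
      using a1 a2
    proof eventually_elim
      case (elim t)
      show ?case
      proof
        assume "t \<in> K"
        then have "((\<lambda>t. Du (m-1) t + p * Dv (m-1) t) has_real_derivative Du m t + p * Dv m t) (at t)"
          using elim by (intro DERIV_add DERIV_cmult) auto
        then show "(F (m - 1) has_real_derivative F m t) (at t)" unfolding F' by simp
      qed
    qed
  qed
  have B: "bc_D n S F" using U(2) V(2) unfolding bc_D_def F_def by auto
  have Q: "AE t in lebesgue. t \<in> K \<longrightarrow> F m t + (\<Sum>k<m. c k t * F k t) = \<sigma> t + p * \<tau> t"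
    using U(3) V(3)
  proof eventually_elim
    case (elim t)
    show ?case
    proof
      assume t: "t \<in> K"
      have "(\<Sum>k<m. c k t * F k t) = (\<Sum>k<m. c k t * Du k t) + p * (\<Sum>k<m. c k t * Dv k t)"
        unfolding F_def by (simp add: algebra_simps sum.distrib sum_distrib_left)
      then have "F m t + (\<Sum>k<m. c k t * F k t) =
          (Du m t + (\<Sum>k<m. c k t * Du k t)) + p * (Dv m t + (\<Sum>k<m. c k t * Dv k t))"
        unfolding F_def by (simp add: algebra_simps)
      then show "F m t + (\<Sum>k<m. c k t * F k t) = \<sigma> t + p * \<tau> t" using elim t by simp
    qed
  qed
  show ?thesis unfolding solves_def using W B Q by blast
qed

lemma green_unique:
  assumes G: "green m K c (bc_D n S) G" and \<sigma>: "\<sigma> absolutely_integrable_on K"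
    and w: "solves m K c (bc_D n S) \<sigma> w" and t: "t \<in> K"
  shows "w t = integral K (\<lambda>s. G t s * \<sigma> s)"
proof -
  have I: "solves m K c (bc_D n S) \<sigma> (\<lambda>t. integral K (\<lambda>s. G t s * \<sigma> s))"
    using G \<sigma> unfolding green_def by blast
  have "solves m K c (bc_D n S) (\<lambda>t. \<sigma> t + (-1) * \<sigma> t) (\<lambda>t. w t + (-1) * integral K (\<lambda>s. G t s * \<sigma> s))"
    by (rule solves_lin[OF w I])
  moreover have "(\<lambda>t. \<sigma> t + (-1) * \<sigma> t) = (\<lambda>_. 0)" by (rule ext) simp
  ultimately have "solves m K c (bc_D n S) (\<lambda>_. 0) (\<lambda>t. w t + (-1) * integral K (\<lambda>s. G t s * \<sigma> s))" by simp
  then have "w t + (-1) * integral K (\<lambda>s. G t s * \<sigma> s) = 0"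
    using G t unfolding green_def nonresonant_def by blast
  then show ?thesis by simp
qed

lemma integral_sign:
  fixes f :: "real \<Rightarrow> real"
  assumes f: "f integrable_on K" and ae: "AE s in lebesgue. s \<in> K \<longrightarrow> f s \<ge> 0"
  shows "integral K f \<ge> 0"
proof -
  obtain N where N: "N \<in> null_sets lebesgue" "{x \<in> space lebesgue. \<not> (x \<in> K \<longrightarrow> f x \<ge> 0)} \<subseteq> N"
    using ae unfolding eventually_ae_filter by blast
  have nN: "negligible N" using N(1) by (simp only: negligible_iff_null_sets)
  let ?g = "\<lambda>x. if x \<in> N then 0 else f x"
  have e: "integral K f = integral K ?g" by (rule integral_spike[OF nN]) simp
  have i: "?g integrable_on K" by (rule integrable_spike[OF f nN]) simp
  have p: "\<And>x. x \<in> K \<Longrightarrow> 0 \<le> ?g x"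
  proof -
    fix x assume x: "x \<in> K"
    show "0 \<le> ?g x"
    proof (cases "x \<in> N")
      case False
      then have "x \<notin> {x \<in> space lebesgue. \<not> (x \<in> K \<longrightarrow> f x \<ge> 0)}" using N(2) by blast
      then show ?thesis using x False by simp
    qed simp
  qed
  have "0 \<le> integral K ?g" by (rule integral_nonneg[OF i p])
  then show ?thesis using e by simp
qed

lemma integral_sign':
  fixes f :: "real \<Rightarrow> real"
  assumes f: "f integrable_on K" and ae: "AE s in lebesgue. s \<in> K \<longrightarrow> f s \<le> 0"
  shows "integral K f \<le> 0"
proof -
  have "integral K (\<lambda>s. - f s) \<ge> 0"
  proof (rule integral_sign)
    show "(\<lambda>s. - f s) integrable_on K" using integrable_neg[OF f] .
    show "AE s in lebesgue. s \<in> K \<longrightarrow> 0 \<le> - f s" using ae by eventually_elim auto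
  qed
  then show ?thesis by (simp add: integral_neg)
qed

theorem theorem6p5:
  fixes n :: nat and T \<alpha> :: real and a :: "nat \<Rightarrow> real \<Rightarrow> real"
    and \<sigma>1 \<sigma>2 uM2 uD :: "real \<Rightarrow> real"
  assumes n: "n \<ge> 1" and T: "T > 0" and \<alpha>: "\<alpha> \<ge> 1"
    and a: "\<forall>k<2*n. in_Lp \<alpha> {0..T} (a k)"
    and GD2T: "\<exists>G. green (2*n) {0..2*T} (refl_coef T a) (bc_D n (2*T)) G"
    and GDT: "\<exists>G. green (2*n) {0..T} a (bc_D n T) G"
    and GM2T: "\<exists>G. green (2*n) {0..T} a (bc_M2 n T) G"
    and \<sigma>1: "\<sigma>1 absolutely_integrable_on {0..T}"
    and \<sigma>2: "\<sigma>2 absolutely_integrable_on {0..T}"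
    and uM2: "solves (2*n) {0..T} a (bc_M2 n T) \<sigma>1 uM2"
    and uD: "solves (2*n) {0..T} a (bc_D n T) \<sigma>2 uD"
  shows
    "((\<exists>G. green (2*n) {0..2*T} (refl_coef T a) (bc_D n (2*T)) G \<and>
           (\<forall>t\<in>{0..2*T}. \<forall>s\<in>{0..2*T}. G t s \<ge> 0)) \<and>
       (AE t in lebesgue. t \<in> {0..T} \<longrightarrow> \<bar>\<sigma>2 t\<bar> \<le> \<sigma>1 t)
       \<longrightarrow> (\<forall>t\<in>{0..T}. \<bar>uD t\<bar> \<le> uM2 t))
     \<and>
     ((\<exists>G. green (2*n) {0..2*T} (refl_coef T a) (bc_D n (2*T)) G \<and>
           (\<forall>t\<in>{0..2*T}. \<forall>s\<in>{0..2*T}. G t s \<le> 0)) \<and>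
       (AE t in lebesgue. t \<in> {0..T} \<longrightarrow> 0 \<le> \<sigma>2 t \<and> \<sigma>2 t \<le> \<sigma>1 t)
       \<longrightarrow> (\<forall>t\<in>{0..T}. uM2 t \<le> 0 \<and> uM2 t \<le> uD t))
     \<and>
     ((\<exists>G. green (2*n) {0..2*T} (refl_coef T a) (bc_D n (2*T)) G \<and>
           (\<forall>t\<in>{0..2*T}. \<forall>s\<in>{0..2*T}. G t s \<le> 0)) \<and>
       (AE t in lebesgue. t \<in> {0..T} \<longrightarrow> \<sigma>1 t \<le> \<sigma>2 t \<and> \<sigma>2 t \<le> 0)
       \<longrightarrow> (\<forall>t\<in>{0..T}. uM2 t \<ge> 0 \<and> uD t \<le> uM2 t))"

proof -
  define J where "J = {0..2*T}"
  define S1 where "S1 t = (if t \<le> T then \<sigma>1 t else 1 * \<sigma>1 (2*T - t))" for t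
  define S2 where "S2 t = (if t \<le> T then \<sigma>2 t else (-1) * \<sigma>2 (2*T - t))" for t
  define U1 where "U1 t = (if t \<le> T then uM2 t else 1 * uM2 (2*T - t))" for t
  define U2 where "U2 t = (if t \<le> T then uD t else (-1) * uD (2*T - t))" for t
  have S1': "S1 = (\<lambda>t. if t \<le> T then \<sigma>1 t else 1 * \<sigma>1 (2*T - t))" unfolding S1_def by (rule ext) simp
  have S2': "S2 = (\<lambda>t. if t \<le> T then \<sigma>2 t else (-1) * \<sigma>2 (2*T - t))" unfolding S2_def by (rule ext) simp
  have U1': "U1 = (\<lambda>t. if t \<le> T then uM2 t else 1 * uM2 (2*T - t))" unfolding U1_def by (rule ext) simp
  have U2': "U2 = (\<lambda>t. if t \<le> T then uD t else (-1) * uD (2*T - t))" unfolding U2_def by (rule ext) simp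
  obtain DuM where M: "W_m1 (2*n) {0..T} uM2 DuM" "bc_M2 n T DuM"
      "AE t in lebesgue. t \<in> {0..T} \<longrightarrow> DuM (2*n) t + (\<Sum>k<2*n. a k t * DuM k t) = \<sigma>1 t"
    using uM2 unfolding solves_def by blast
  obtain DuD where D: "W_m1 (2*n) {0..T} uD DuD" "bc_D n T DuD"
      "AE t in lebesgue. t \<in> {0..T} \<longrightarrow> DuD (2*n) t + (\<Sum>k<2*n. a k t * DuD k t) = \<sigma>2 t"
    using uD unfolding solves_def by blast
  have gM: "\<forall>k<2*n. DuM k T = 1 * (-1)^k * DuM k T"
  proof (intro allI impI)
    fix k assume k: "k < 2*n"
    show "DuM k T = 1 * (-1)^k * DuM k T"
    proof (cases "even k")
      case False
      then obtain j where j: "k = 2*j + 1" by (metis oddE)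
      then have "j < n" using k by simp
      then have "DuM k T = 0" using M(2) j unfolding bc_M2_def by blast
      then show ?thesis by simp
    qed simp
  qed
  have gD: "\<forall>k<2*n. DuD k T = (-1) * (-1)^k * DuD k T"
  proof (intro allI impI)
    fix k assume k: "k < 2*n"
    show "DuD k T = (-1) * (-1)^k * DuD k T"
    proof (cases "even k")
      case True
      then obtain j where j: "k = 2*j" by (metis evenE)
      then have "j < n" using k by simp
      then have "DuD k T = 0" using D(2) j unfolding bc_D_def by blast
      then show ?thesis by simp
    qed simp
  qed
  have solM: "solves (2*n) J (refl_coef T a) (bc_D n (2*T)) S1 U1"
    unfolding J_def S1' U1'
    by (rule reflect_solves[OF n T _ M(1) _ gM M(3)]) (use M(2) in \<open>auto simp: bc_M2_def\<close>)
  have solD: "solves (2*n) J (refl_coef T a) (bc_D n (2*T)) S2 U2"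
    unfolding J_def S2' U2'
    by (rule reflect_solves[OF n T _ D(1) _ gD D(3)]) (use D(2) in \<open>auto simp: bc_D_def\<close>)
  have aS1: "S1 absolutely_integrable_on J" unfolding J_def S1' by (rule absint_reflect[OF \<sigma>1 T])
  have aS2: "S2 absolutely_integrable_on J" unfolding J_def S2' by (rule absint_reflect[OF \<sigma>2 T])
  have core: "uM2 t + p * uD t = integral J (\<lambda>s. G t s * (S1 s + p * S2 s))"
    if G: "green (2*n) J (refl_coef T a) (bc_D n (2*T)) G" and t: "t \<in> {0..T}" for G p t
  proof -
    have sol: "solves (2*n) J (refl_coef T a) (bc_D n (2*T)) (\<lambda>t. S1 t + p * S2 t) (\<lambda>t. U1 t + p * U2 t)"
      by (rule solves_lin[OF solM solD])
    have ai: "(\<lambda>t. S1 t + p * S2 t) absolutely_integrable_on J"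
      by (rule set_integral_add(1)[OF aS1]) (rule set_integrable_mult_right[OF aS2])
    have tJ: "t \<in> J" using t T unfolding J_def by auto
    have "U1 t + p * U2 t = integral J (\<lambda>s. G t s * (S1 s + p * S2 s))"
      by (rule green_unique[OF G ai sol tJ])
    then show ?thesis using t unfolding U1_def U2_def by simp
  qed
  have integ: "(\<lambda>s. G t s * (S1 s + p * S2 s)) integrable_on J"
    if G: "green (2*n) J (refl_coef T a) (bc_D n (2*T)) G" and t: "t \<in> {0..T}" for G p t
  proof -
    have ai: "(\<lambda>t. S1 t + p * S2 t) absolutely_integrable_on J"
      by (rule set_integral_add(1)[OF aS1]) (rule set_integrable_mult_right[OF aS2])
    have tJ: "t \<in> J" using t T unfolding J_def by auto
    show ?thesis using G ai tJ unfolding green_def by blast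
  qed
  have transfer: "AE s in lebesgue. s \<in> J \<longrightarrow> Q (S1 s + p * S2 s)"
    if h1: "AE t in lebesgue. t \<in> {0..T} \<longrightarrow> Q (\<sigma>1 t + p * \<sigma>2 t)"
      and h2: "AE t in lebesgue. t \<in> {0..T} \<longrightarrow> Q (\<sigma>1 t - p * \<sigma>2 t)" for Q p
    using h1 AE_reflect[OF h2, of "2*T"]
  proof eventually_elim
    case (elim s)
    show ?case
    proof
      assume s: "s \<in> J"
      show "Q (S1 s + p * S2 s)"
      proof (cases "s \<le> T")
        case True then show ?thesis using elim s unfolding J_def S1_def S2_def by auto
      next
        case False
        then have "2*T - s \<in> {0..T}" using s unfolding J_def by auto
        then have "Q (\<sigma>1 (2*T - s) - p * \<sigma>2 (2*T - s))" using elim by blast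
        then show ?thesis using False unfolding S1_def S2_def by simp
      qed
    qed
  qed
  have pos: "uM2 t + p * uD t \<ge> 0"
    if G: "green (2*n) J (refl_coef T a) (bc_D n (2*T)) G" and Gs: "\<forall>t\<in>J. \<forall>s\<in>J. G t s \<ge> 0"
      and h: "AE s in lebesgue. s \<in> J \<longrightarrow> S1 s + p * S2 s \<ge> 0" and t: "t \<in> {0..T}" for G p t
  proof -
    have tJ: "t \<in> J" using t T unfolding J_def by auto
    have "AE s in lebesgue. s \<in> J \<longrightarrow> G t s * (S1 s + p * S2 s) \<ge> 0"
      using h by eventually_elim (use Gs tJ in auto)
    then have "integral J (\<lambda>s. G t s * (S1 s + p * S2 s)) \<ge> 0"
      by (rule integral_sign[OF integ[OF G t]])
    then show ?thesis using core[OF G t] by simp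
  qed
  have neg1: "uM2 t + p * uD t \<le> 0"
    if G: "green (2*n) J (refl_coef T a) (bc_D n (2*T)) G" and Gs: "\<forall>t\<in>J. \<forall>s\<in>J. G t s \<le> 0"
      and h: "AE s in lebesgue. s \<in> J \<longrightarrow> S1 s + p * S2 s \<ge> 0" and t: "t \<in> {0..T}" for G p t
  proof -
    have tJ: "t \<in> J" using t T unfolding J_def by auto
    have "AE s in lebesgue. s \<in> J \<longrightarrow> G t s * (S1 s + p * S2 s) \<le> 0"
      using h by eventually_elim (use Gs tJ in \<open>auto simp: mult_nonpos_nonneg\<close>)
    then have "integral J (\<lambda>s. G t s * (S1 s + p * S2 s)) \<le> 0"
      by (rule integral_sign'[OF integ[OF G t]])
    then show ?thesis using core[OF G t] by simp
  qed
  have neg2: "uM2 t + p * uD t \<ge> 0"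
    if G: "green (2*n) J (refl_coef T a) (bc_D n (2*T)) G" and Gs: "\<forall>t\<in>J. \<forall>s\<in>J. G t s \<le> 0"
      and h: "AE s in lebesgue. s \<in> J \<longrightarrow> S1 s + p * S2 s \<le> 0" and t: "t \<in> {0..T}" for G p t
  proof -
    have tJ: "t \<in> J" using t T unfolding J_def by auto
    have "AE s in lebesgue. s \<in> J \<longrightarrow> G t s * (S1 s + p * S2 s) \<ge> 0"
      using h by eventually_elim (use Gs tJ in \<open>auto simp: mult_nonpos_nonpos\<close>)
    then have "integral J (\<lambda>s. G t s * (S1 s + p * S2 s)) \<ge> 0"
      by (rule integral_sign[OF integ[OF G t]])
    then show ?thesis using core[OF G t] by simp
  qed
  show ?thesis
  proof (intro conjI impI)
    assume A: "(\<exists>G. green (2*n) {0..2*T} (refl_coef T a) (bc_D n (2*T)) G \<and>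
           (\<forall>t\<in>{0..2*T}. \<forall>s\<in>{0..2*T}. G t s \<ge> 0)) \<and>
       (AE t in lebesgue. t \<in> {0..T} \<longrightarrow> \<bar>\<sigma>2 t\<bar> \<le> \<sigma>1 t)"
    then obtain G where G: "green (2*n) J (refl_coef T a) (bc_D n (2*T)) G" "\<forall>t\<in>J. \<forall>s\<in>J. G t s \<ge> 0"
      unfolding J_def by blast
    have ae: "AE t in lebesgue. t \<in> {0..T} \<longrightarrow> \<bar>\<sigma>2 t\<bar> \<le> \<sigma>1 t" using A by blast
    have a1: "AE t in lebesgue. t \<in> {0..T} \<longrightarrow> 0 \<le> \<sigma>1 t + q * \<sigma>2 t" if "q = 1 \<or> q = -1" for q
      using ae by eventually_elim (use that in auto)
    have h1: "AE s in lebesgue. s \<in> J \<longrightarrow> S1 s + 1 * S2 s \<ge> 0"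
      by (rule transfer) (use a1[of 1] a1[of "-1"] in auto)
    have h2: "AE s in lebesgue. s \<in> J \<longrightarrow> S1 s + (-1) * S2 s \<ge> 0"
      by (rule transfer) (use a1[of 1] a1[of "-1"] in auto)
    show "\<forall>t\<in>{0..T}. \<bar>uD t\<bar> \<le> uM2 t"
    proof
      fix t assume t: "t \<in> {0..T}"
      have "uM2 t + 1 * uD t \<ge> 0" by (rule pos[OF G h1 t])
      moreover have "uM2 t + (-1) * uD t \<ge> 0" by (rule pos[OF G h2 t])
      ultimately show "\<bar>uD t\<bar> \<le> uM2 t" by simp
    qed
  next
    assume A: "(\<exists>G. green (2*n) {0..2*T} (refl_coef T a) (bc_D n (2*T)) G \<and>
           (\<forall>t\<in>{0..2*T}. \<forall>s\<in>{0..2*T}. G t s \<le> 0)) \<and>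
       (AE t in lebesgue. t \<in> {0..T} \<longrightarrow> 0 \<le> \<sigma>2 t \<and> \<sigma>2 t \<le> \<sigma>1 t)"
    then obtain G where G: "green (2*n) J (refl_coef T a) (bc_D n (2*T)) G" "\<forall>t\<in>J. \<forall>s\<in>J. G t s \<le> 0"
      unfolding J_def by blast
    have ae: "AE t in lebesgue. t \<in> {0..T} \<longrightarrow> 0 \<le> \<sigma>2 t \<and> \<sigma>2 t \<le> \<sigma>1 t" using A by blast
    have a1: "AE t in lebesgue. t \<in> {0..T} \<longrightarrow> 0 \<le> \<sigma>1 t + q * \<sigma>2 t" if "q = 0 \<or> q = 1 \<or> q = -1" for q
      using ae by eventually_elim (use that in auto)
    have h1: "AE s in lebesgue. s \<in> J \<longrightarrow> S1 s + 0 * S2 s \<ge> 0"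
      by (rule transfer) (use a1[of 0] in auto)
    have h2: "AE s in lebesgue. s \<in> J \<longrightarrow> S1 s + (-1) * S2 s \<ge> 0"
      by (rule transfer) (use a1[of 1] a1[of "-1"] in auto)
    show "\<forall>t\<in>{0..T}. uM2 t \<le> 0 \<and> uM2 t \<le> uD t"
    proof
      fix t assume t: "t \<in> {0..T}"
      have "uM2 t + 0 * uD t \<le> 0" by (rule neg1[OF G h1 t])
      moreover have "uM2 t + (-1) * uD t \<le> 0" by (rule neg1[OF G h2 t])
      ultimately show "uM2 t \<le> 0 \<and> uM2 t \<le> uD t" by simp
    qed
  next
    assume A: "(\<exists>G. green (2*n) {0..2*T} (refl_coef T a) (bc_D n (2*T)) G \<and>
           (\<forall>t\<in>{0..2*T}. \<forall>s\<in>{0..2*T}. G t s \<le> 0)) \<and>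
       (AE t in lebesgue. t \<in> {0..T} \<longrightarrow> \<sigma>1 t \<le> \<sigma>2 t \<and> \<sigma>2 t \<le> 0)"
    then obtain G where G: "green (2*n) J (refl_coef T a) (bc_D n (2*T)) G" "\<forall>t\<in>J. \<forall>s\<in>J. G t s \<le> 0"
      unfolding J_def by blast
    have ae: "AE t in lebesgue. t \<in> {0..T} \<longrightarrow> \<sigma>1 t \<le> \<sigma>2 t \<and> \<sigma>2 t \<le> 0" using A by blast
    have a1: "AE t in lebesgue. t \<in> {0..T} \<longrightarrow> \<sigma>1 t + q * \<sigma>2 t \<le> 0" if "q = 0 \<or> q = 1 \<or> q = -1" for q
      using ae by eventually_elim (use that in auto)
    have h1: "AE s in lebesgue. s \<in> J \<longrightarrow> S1 s + 0 * S2 s \<le> 0"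
      by (rule transfer) (use a1[of 0] in auto)
    have h2: "AE s in lebesgue. s \<in> J \<longrightarrow> S1 s + (-1) * S2 s \<le> 0"
      by (rule transfer) (use a1[of 1] a1[of "-1"] in auto)
    show "\<forall>t\<in>{0..T}. uM2 t \<ge> 0 \<and> uD t \<le> uM2 t"
    proof
      fix t assume t: "t \<in> {0..T}"
      have "uM2 t + 0 * uD t \<ge> 0" by (rule neg2[OF G h1 t])
      moreover have "uM2 t + (-1) * uD t \<ge> 0" by (rule neg2[OF G h2 t])
      ultimately show "uM2 t \<ge> 0 \<and> uD t \<le> uM2 t" by simp
    qed
  qed
qed

end
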